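(* Let $X$ be a random variable taking values in $\{0,1,2,\dots\}$ with finite mean, probability mass function $p_X$ and probability generating function $\Psi_X(t)=\mathrm{E}[t^X]$, $t\in[0,1]$, and suppose $X\in\Delta$. For $\mu>0$ set $D(t,\mu)=\Psi_X'(t)-\mu\Psi_X(t)$. For any natural number $k\ge 0$ let $f_k(\mu)=e^{-\mu}\left(1+\mu+\frac{\mu^2}{2!}+\dots+\frac{\mu^k}{k!}\right)$ and $$T^{(k)}=f_k(\mu)-p_X(0)\left(1+\mu+\dots+\frac{\mu^k}{k!}\right).$$ Then for any $\mu>0$ and any natural number $k$, $$\frac{1}{1+\mu+\dots+\frac{\mu^k}{k!}}\,|T^{(k)}|\le \int_0^1 |D(t,\mu)|\,dt\le e^{\mu}\,|T^{(k)}|.$$ In particular, for $k=0$, $$|e^{-\mu}-p_X(0)|\le \int_0^1|D(t,\mu)|\,dt\le e^{\mu}|e^{-\mu}-p_X(0)|.$$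
   Context: $\Delta$ denotes the class of distributions of random variables $X$ with values in $\{0,1,2,\dots\}$ (with finite mean) such that, for every $\mu>0$, the function $t\mapsto D(t,\mu)=\Psi_X'(t)-\mu\Psi_X(t)$ is either nonnegative for all $t\in[0,1]$ or nonpositive for all $t\in[0,1]$, where $\Psi_X(t)=\mathrm{E}[t^X]$ is the probability generating function and $\Psi_X'$ its derivative. *)

theory Defs
  imports "HOL-Probability.Probability"
begin

definition finite_mean :: "nat pmf \<Rightarrow> bool" where
  "finite_mean p \<longleftrightarrow> summable (\<lambda>n. real n * pmf p n)"

definition pgf :: "nat pmf \<Rightarrow> real \<Rightarrow> real" where
  "pgf p t = (\<Sum>n. pmf p n * t ^ n)"

definition pgf_deriv :: "nat pmf \<Rightarrow> real \<Rightarrow> real" where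
  "pgf_deriv p t = (THE d. (pgf p has_real_derivative d) (at t within {0..1}))"

definition D_fun :: "nat pmf \<Rightarrow> real \<Rightarrow> real \<Rightarrow> real" where
  "D_fun p t \<mu> = pgf_deriv p t - \<mu> * pgf p t"

definition in_Delta :: "nat pmf \<Rightarrow> bool" where
  "in_Delta p \<longleftrightarrow> finite_mean p \<and>
     (\<forall>\<mu>>0. (\<forall>t\<in>{0..1}. D_fun p t \<mu> \<ge> 0) \<or> (\<forall>t\<in>{0..1}. D_fun p t \<mu> \<le> 0))"

definition f_k :: "nat \<Rightarrow> real \<Rightarrow> real" where
  "f_k k \<mu> = exp (- \<mu>) * (\<Sum>i\<le>k. \<mu> ^ i / fact i)"

definition T_k :: "nat pmf \<Rightarrow> nat \<Rightarrow> real \<Rightarrow> real" where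
  "T_k p k \<mu> = f_k k \<mu> - pmf p 0 * (\<Sum>i\<le>k. \<mu> ^ i / fact i)"

end

theory Submission imports Defs begin

lemma pmf_sums_1: "(\<lambda>n. pmf (p::nat pmf) n) sums 1"
proof -
  have "integrable (count_space UNIV) (pmf p)"
    by (simp add: integrable_pmf)
  from sums_integral_count_space_nat[OF this]
  have "(\<lambda>n. pmf p n) sums (integral\<^sup>L (count_space UNIV) (pmf p))" .
  moreover have "integral\<^sup>L (count_space UNIV) (pmf p) = 1"
    by (subst integral_eq_nn_integral) (auto simp: nn_integral_pmf)
  ultimately show ?thesis by simp
qed

lemma pgf_cont: "continuous_on {0..1} (pgf p)"
proof -
  have "uniform_limit {0..1::real} (\<lambda>n x. \<Sum>i<n. pmf p i * x ^ i) (\<lambda>x. suminf (\<lambda>i. pmf p i * x ^ i)) sequentially"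
    by (rule Weierstrass_m_test[where M="pmf p"])
      (auto simp: abs_mult pmf_nonneg intro!: mult_left_le power_le_one sums_summable[OF pmf_sums_1])
  note ul = this
  have ev: "\<forall>\<^sub>F n in sequentially. continuous_on {0..1::real} (\<lambda>x. \<Sum>i<n. pmf p i * x ^ i)"
    by (intro always_eventually allI) (auto intro!: continuous_intros)
  have "continuous_on {0..1} (\<lambda>x. suminf (\<lambda>i. pmf p i * x ^ i))"
    by (rule uniform_limit_theorem[OF ev ul trivial_limit_sequentially])
  then show ?thesis unfolding pgf_def[abs_def] .
qed

lemma pgf_deriv_ok:
  assumes "t \<in> {0<..<1::real}"
  shows "(pgf p has_real_derivative pgf_deriv p t) (at t)"
proof -
  have s: "summable (\<lambda>n. pmf p n * 1 ^ n)" using sums_summable[OF pmf_sums_1] by simp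
  have d: "(pgf p has_real_derivative (\<Sum>n. diffs (pmf p) n * t^n)) (at t)"
    unfolding pgf_def[abs_def] using termdiffs_strong[OF s, of t] assms by simp
  have at: "at t within {0..1} = at t" using assms by (intro at_within_interior) simp
  have "pgf_deriv p t = (\<Sum>n. diffs (pmf p) n * t^n)"
    unfolding pgf_deriv_def at by (rule the_equality[where P="\<lambda>d. (pgf p has_real_derivative d) (at t)"]) (use d DERIV_unique in auto)
  with d show ?thesis by simp
qed

lemma pgf_1: "pgf p 1 = 1" unfolding pgf_def using pmf_sums_1 sums_unique by fastforce
lemma pgf_0: "pgf p 0 = pmf p 0" unfolding pgf_def using powser_zero[of "pmf p"] by simp


theorem proposition1:
  fixes p :: "nat pmf" and \<mu> :: real and k :: nat
  assumes "in_Delta p" and "\<mu> > 0"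
  shows "(1 / (\<Sum>i\<le>k. \<mu> ^ i / fact i)) * \<bar>T_k p k \<mu>\<bar>
            \<le> integral {0..1} (\<lambda>t. \<bar>D_fun p t \<mu>\<bar>)
      \<and> integral {0..1} (\<lambda>t. \<bar>D_fun p t \<mu>\<bar>) \<le> exp \<mu> * \<bar>T_k p k \<mu>\<bar>"
proof -
  define c where "c = exp (- \<mu>) - pmf p 0"
  define S where "S = (\<Sum>i\<le>k. \<mu> ^ i / fact i)"
  define D where "D = (\<lambda>t. D_fun p t \<mu>)"
  have D_eq: "D t = pgf_deriv p t - \<mu> * pgf p t" for t
    unfolding D_def D_fun_def by simp
  have h1: "(pgf_deriv p has_integral pgf p 1 - pgf p 0) {0..1}"
    by (rule fundamental_theorem_of_calculus_interior)
       (auto simp: pgf_cont has_real_derivative_iff_has_vector_derivative[symmetric] intro!: pgf_deriv_ok)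
  have cg: "continuous_on {0..1} (\<lambda>t. exp (- \<mu> * t) * pgf p t)"
    by (intro continuous_intros pgf_cont)
  have dg: "((\<lambda>t. exp (- \<mu> * t) * pgf p t) has_real_derivative exp (- \<mu> * t) * D t) (at t)"
    if "t \<in> {0<..<1}" for t
  proof -
    have "((\<lambda>t. exp (- \<mu> * t) * pgf p t) has_real_derivative
        exp (- \<mu> * t) * (- \<mu>) * pgf p t + exp (- \<mu> * t) * pgf_deriv p t) (at t)"
      using pgf_deriv_ok[OF that] by (auto intro!: derivative_eq_intros)
    moreover have "exp (- \<mu> * t) * (- \<mu>) * pgf p t + exp (- \<mu> * t) * pgf_deriv p t
        = exp (- \<mu> * t) * D t" by (simp add: D_eq algebra_simps)
    ultimately show ?thesis by simp
  qed
  have h2: "((\<lambda>t. exp (- \<mu> * t) * D t) has_integral c) {0..1}"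
  proof -
    have "((\<lambda>t. exp (- \<mu> * t) * D t) has_integral
       (exp (- \<mu> * 1) * pgf p 1 - exp (- \<mu> * 0) * pgf p 0)) {0..1}"
      by (rule fundamental_theorem_of_calculus_interior[OF _ cg])
         (use dg in \<open>auto simp: has_real_derivative_iff_has_vector_derivative[symmetric]\<close>)
    then show ?thesis by (simp add: pgf_1 pgf_0 c_def)
  qed
  have intD: "D integrable_on {0..1}"
  proof -
    have "(\<lambda>t. pgf_deriv p t - \<mu> * pgf p t) integrable_on {0..1}"
      by (intro integrable_diff integrable_continuous_interval continuous_intros pgf_cont
           has_integral_integrable[OF h1])
    then show ?thesis by (simp add: D_eq[abs_def])
  qed
  obtain s :: real where s: "s = 1 \<or> s = -1" and sD: "\<And>t. t \<in> {0..1} \<Longrightarrow> \<bar>D t\<bar> = s * D t"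
  proof -
    from assms have "(\<forall>t\<in>{0..1}. D t \<ge> 0) \<or> (\<forall>t\<in>{0..1}. D t \<le> 0)"
      unfolding in_Delta_def D_def by blast
    then show ?thesis
    proof
      assume "\<forall>t\<in>{0..1}. D t \<ge> 0" then show ?thesis by (intro that[of 1]) auto
    next
      assume "\<forall>t\<in>{0..1}. D t \<le> 0" then show ?thesis by (intro that[of "-1"]) auto
    qed
  qed
  define I where "I = integral {0..1} (\<lambda>t. \<bar>D t\<bar>)"
  have hI: "((\<lambda>t. \<bar>D t\<bar>) has_integral I) {0..1}"
  proof -
    have "(\<lambda>t. s * D t) integrable_on {0..1}" by (rule has_integral_integrable[OF has_integral_mult_right[OF integrable_integral[OF intD]]])
    then have "(\<lambda>t. \<bar>D t\<bar>) integrable_on {0..1}"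
      using sD integrable_cong by (metis (no_types, lifting))
    then show ?thesis unfolding I_def by (simp add: integrable_integral)
  qed
  have h3: "((\<lambda>t. exp (- \<mu> * t) * \<bar>D t\<bar>) has_integral s * c) {0..1}"
  proof -
    have "((\<lambda>t. s * (exp (- \<mu> * t) * D t)) has_integral s * c) {0..1}"
      by (rule has_integral_mult_right[OF h2])
    then show ?thesis
      by (rule has_integral_cong[THEN iffD1, rotated]) (simp add: sD)
  qed
  have sc0: "0 \<le> s * c" by (rule has_integral_nonneg[OF h3]) auto
  have abs_c: "\<bar>c\<bar> = s * c" using s sc0 by auto
  have up: "s * c \<le> I"
  proof (rule has_integral_le[OF h3 hI])
    fix t :: real assume "t \<in> {0..1}"
    then have "exp (- \<mu> * t) \<le> 1" using assms(2) by auto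
    then show "exp (- \<mu> * t) * \<bar>D t\<bar> \<le> \<bar>D t\<bar>"
      by (simp add: mult_left_le_one_le)
  qed
  have lo: "exp (- \<mu>) * I \<le> s * c"
  proof (rule has_integral_le[OF has_integral_mult_right[OF hI] h3])
    fix t :: real assume "t \<in> {0..1}"
    then have "exp (- \<mu>) \<le> exp (- \<mu> * t)" using assms(2) by (auto simp: mult_left_le)
    then show "exp (- \<mu>) * \<bar>D t\<bar> \<le> exp (- \<mu> * t) * \<bar>D t\<bar>"
      by (simp add: mult_right_mono)
  qed
  have S1: "S \<ge> 1"
  proof -
    have "S = 1 + (\<Sum>i\<in>{1..k}. \<mu> ^ i / fact i)"
      unfolding S_def by (simp add: atMost_atLeast0 sum.atLeast_Suc_atMost)
    moreover have "(\<Sum>i\<in>{1..k}. \<mu> ^ i / fact i) \<ge> 0"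
      using assms(2) by (intro sum_nonneg) auto
    ultimately show ?thesis by simp
  qed
  have T: "T_k p k \<mu> = S * c"
    unfolding T_k_def f_k_def S_def c_def by (simp add: algebra_simps)
  have absT: "\<bar>T_k p k \<mu>\<bar> = S * \<bar>c\<bar>" using T S1 by (simp add: abs_mult)
  have "exp \<mu> * (exp (- \<mu>) * I) = I" by (simp add: exp_minus)
  then have "I \<le> exp \<mu> * \<bar>c\<bar>" using lo abs_c
    by (metis exp_gt_zero mult_left_mono less_imp_le)
  also have "\<dots> \<le> exp \<mu> * (S * \<bar>c\<bar>)"
    using S1 by (intro mult_left_mono) (auto intro: mult_right_mono[of 1 S, simplified])
  finally have A: "I \<le> exp \<mu> * \<bar>T_k p k \<mu>\<bar>" using absT by simp
  have B: "1 / S * \<bar>T_k p k \<mu>\<bar> \<le> I" using absT S1 up abs_c by simp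
  show ?thesis using A B unfolding I_def D_def S_def by simp
qed

end
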